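(* $\mathrm{GenMem}(\mathrm{RL}) = 2$.
   Context: Let $\Omega=\mathbb{N}\times\{0,1\}$ with partial order $(n,a)\preceq(m,b)$ iff $(n,a)=(m,b)$ or $n<m$. Let $\mathbb{M}$ be the set of all functions $f\colon\Omega\to\Omega$ monotone w.r.t. $\preceq$. The Rope Ladder condition $\mathrm{RL}\subseteq\mathbb{M}^\omega$ (a winning condition over the color set $\mathbb{M}$) consists of all sequences $(f_1,f_2,\ldots)\in\mathbb{M}^\omega$ for which there is $(N,b)\in\Omega$ with $f_n\circ\cdots\circ f_1((0,0))\preceq(N,b)$ for all $n\ge1$. An arena over a color set $C$ is a tuple $\langle V_P, V_A, E\rangle$ of finite sets with $V_P\cap V_A=\varnothing$, $V=V_P\cup V_A\neq\varnothing$, $E\subseteq V\times C\times V$, every node having an outgoing edge. Paths are non-empty finite/infinite sequences of consecutive edges, plus $0$-length paths $\lambda_v$ at each node. A Protagonist's strategy maps each finite path ending in $V_P$ to an outgoing edge of its last node; a path is consistent with $S$ if every edge leaving a Protagonist node along it is the one chosen by $S$ on the preceding prefix. $S$ is winning from $u$ w.r.t. $W\subseteq C^\omega$ if every infinite path consistent with $S$ from $u$ has color sequence in $W$; $S$ is optimal w.r.t. $W$ if there is no node from which some strategy wins w.r.t. $W$ but $S$ does not. A (general) memory structure is $\langle M,m_{init},\delta\rangle$ with $M$ finite, $m_{init}\in M$, $\delta\colon M\times E\to M$ (extended to finite edge sequences by iteration). A strategy $S$ is built on top of it if $S(p_1)=S(p_2)$ whenever $p_1,p_2$ end at the same Protagonist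 node and $\delta(m_{init},p_1)=\delta(m_{init},p_2)$; with $k$ memory states this is a strategy with $k$ states of general memory. $\mathrm{GenMem}(W)$ is the least $k\in\mathbb{Z}^+$ such that every arena over $C$ admits a Protagonist's strategy with $k$ states of general memory that is optimal w.r.t. $W$ ($+\infty$ if none exists). *)

theory Defs
  imports Main "HOL-Library.Extended_Nat"
begin

type_synonym omega = "nat \<times> bool"   (* (n,False) = (n,0), (n,True) = (n,1) *)

definition omega_le :: "omega \<Rightarrow> omega \<Rightarrow> bool" where
  "omega_le x y \<longleftrightarrow> x = y \<or> fst x < fst y"

definition monoM :: "(omega \<Rightarrow> omega) set" where
  "monoM = {f. \<forall>x y. omega_le x y \<longrightarrow> omega_le (f x) (f y)}"

(* comp_pref fs n x = f_n o ... o f_1 x, where f_i = fs (i-1) *)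
fun comp_pref :: "(nat \<Rightarrow> ('a \<Rightarrow> 'a)) \<Rightarrow> nat \<Rightarrow> 'a \<Rightarrow> 'a" where
  "comp_pref fs 0 x = x"
| "comp_pref fs (Suc n) x = fs n (comp_pref fs n x)"

definition RL :: "(nat \<Rightarrow> (omega \<Rightarrow> omega)) set" where
  "RL = {fs. (\<forall>i. fs i \<in> monoM) \<and>
             (\<exists>N b. \<forall>n\<ge>1. omega_le (comp_pref fs n (0, False)) (N, b))}"

type_synonym 'c edge = "nat \<times> 'c \<times> nat"
type_synonym 'c arena = "nat set \<times> nat set \<times> 'c edge set"

definition src :: "'c edge \<Rightarrow> nat" where "src e = fst e"
definition tgt :: "'c edge \<Rightarrow> nat" where "tgt e = snd (snd e)"
definition col :: "'c edge \<Rightarrow> 'c" where "col e = fst (snd e)"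

definition VP :: "'c arena \<Rightarrow> nat set" where "VP A = fst A"
definition VA :: "'c arena \<Rightarrow> nat set" where "VA A = fst (snd A)"
definition Ed :: "'c arena \<Rightarrow> 'c edge set" where "Ed A = snd (snd A)"
definition Vs :: "'c arena \<Rightarrow> nat set" where "Vs A = VP A \<union> VA A"

definition is_arena :: "'c set \<Rightarrow> 'c arena \<Rightarrow> bool" where
  "is_arena C A \<longleftrightarrow> finite (VP A) \<and> finite (VA A) \<and> finite (Ed A) \<and>
     VP A \<inter> VA A = {} \<and> Vs A \<noteq> {} \<and>
     Ed A \<subseteq> Vs A \<times> C \<times> Vs A \<and>
     (\<forall>v\<in>Vs A. \<exists>e\<in>Ed A. src e = v)"

fun chain_from :: "nat \<Rightarrow> 'c edge list \<Rightarrow> bool" where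
  "chain_from v [] = True"
| "chain_from v (e # es) = (src e = v \<and> chain_from (tgt e) es)"

(* finite path: start node v and edge list es (es = [] is the 0-length path lambda_v) *)
definition fpath :: "'c arena \<Rightarrow> nat \<Rightarrow> 'c edge list \<Rightarrow> bool" where
  "fpath A v es \<longleftrightarrow> v \<in> Vs A \<and> set es \<subseteq> Ed A \<and> chain_from v es"

definition last_node :: "nat \<Rightarrow> 'c edge list \<Rightarrow> nat" where
  "last_node v es = (if es = [] then v else tgt (last es))"

definition ipath :: "'c arena \<Rightarrow> nat \<Rightarrow> (nat \<Rightarrow> 'c edge) \<Rightarrow> bool" where
  "ipath A u p \<longleftrightarrow> (\<forall>i. p i \<in> Ed A) \<and> src (p 0) = u \<and> (\<forall>i. tgt (p i) = src (p (Suc i)))"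

type_synonym 'c strategy = "nat \<Rightarrow> 'c edge list \<Rightarrow> 'c edge"

definition is_strategy :: "'c arena \<Rightarrow> 'c strategy \<Rightarrow> bool" where
  "is_strategy A S \<longleftrightarrow> (\<forall>v es. fpath A v es \<and> last_node v es \<in> VP A \<longrightarrow>
       S v es \<in> Ed A \<and> src (S v es) = last_node v es)"

definition consistent :: "'c arena \<Rightarrow> 'c strategy \<Rightarrow> nat \<Rightarrow> (nat \<Rightarrow> 'c edge) \<Rightarrow> bool" where
  "consistent A S u p \<longleftrightarrow> (\<forall>i. src (p i) \<in> VP A \<longrightarrow> p i = S u (map p [0..<i]))"

definition winning_from :: "'c arena \<Rightarrow> (nat \<Rightarrow> 'c) set \<Rightarrow> 'c strategy \<Rightarrow> nat \<Rightarrow> bool" where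
  "winning_from A W S u \<longleftrightarrow>
     (\<forall>p. ipath A u p \<and> consistent A S u p \<longrightarrow> (\<lambda>i. col (p i)) \<in> W)"

definition optimal :: "'c arena \<Rightarrow> (nat \<Rightarrow> 'c) set \<Rightarrow> 'c strategy \<Rightarrow> bool" where
  "optimal A W S \<longleftrightarrow> \<not> (\<exists>u\<in>Vs A. (\<exists>S'. is_strategy A S' \<and> winning_from A W S' u)
                                  \<and> \<not> winning_from A W S u)"

definition memory_structure :: "'c arena \<Rightarrow> nat \<Rightarrow> nat \<Rightarrow> (nat \<Rightarrow> 'c edge \<Rightarrow> nat) \<Rightarrow> bool" where
  "memory_structure A k m0 \<delta> \<longleftrightarrow> m0 < k \<and> (\<forall>m<k. \<forall>e\<in>Ed A. \<delta> m e < k)"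

definition built_on :: "'c arena \<Rightarrow> nat \<Rightarrow> (nat \<Rightarrow> 'c edge \<Rightarrow> nat) \<Rightarrow> 'c strategy \<Rightarrow> bool" where
  "built_on A m0 \<delta> S \<longleftrightarrow>
     (\<forall>v1 es1 v2 es2. fpath A v1 es1 \<and> fpath A v2 es2 \<and>
        last_node v1 es1 = last_node v2 es2 \<and> last_node v1 es1 \<in> VP A \<and>
        foldl \<delta> m0 es1 = foldl \<delta> m0 es2 \<longrightarrow> S v1 es1 = S v2 es2)"

definition has_mem_optimal :: "'c set \<Rightarrow> (nat \<Rightarrow> 'c) set \<Rightarrow> nat \<Rightarrow> bool" where
  "has_mem_optimal C W k \<longleftrightarrow>
     (\<forall>A. is_arena C A \<longrightarrow>
        (\<exists>m0 \<delta> S. memory_structure A k m0 \<delta> \<and> is_strategy A S \<and>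
                  built_on A m0 \<delta> S \<and> optimal A W S))"

definition GenMem :: "'c set \<Rightarrow> (nat \<Rightarrow> 'c) set \<Rightarrow> enat" where
  "GenMem C W = (if \<exists>k\<ge>1. has_mem_optimal C W k
                 then enat (LEAST k. k \<ge> 1 \<and> has_mem_optimal C W k) else \<infinity>)"

end

theory Submission
  imports Defs
begin

lemma omega_le_refl: "omega_le x x" by (simp add: omega_le_def)
lemma omega_le_trans: "omega_le x y \<Longrightarrow> omega_le y z \<Longrightarrow> omega_le x z"
  by (auto simp: omega_le_def)
lemma monoM_D: "f \<in> monoM \<Longrightarrow> omega_le x y \<Longrightarrow> omega_le (f x) (f y)"
  unfolding monoM_def by blast

lemma chain_from_append[simp]:
  "chain_from v (es @ fs) = (chain_from v es \<and> chain_from (last_node v es) fs)"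
  by (induction es arbitrary: v) (auto simp: last_node_def)

lemma last_node_snoc[simp]: "last_node v (es @ [e]) = tgt e"
  by (simp add: last_node_def)
lemma last_node_Nil[simp]: "last_node v [] = v"
  by (simp add: last_node_def)

lemma comp_pref_foldl:
  "comp_pref (\<lambda>i. col (p i)) n x = foldl (\<lambda>x e. col e x) x (map p [0..<n])"
  by (induction n) auto

lemma ipath_prefix:
  assumes "ipath A u p"
  shows "chain_from u (map p [0..<i]) \<and> last_node u (map p [0..<i]) = src (p i)"
  using assms by (induction i) (auto simp: ipath_def)

lemma arena_edge:
  "is_arena C A \<Longrightarrow> e \<in> Ed A \<Longrightarrow> src e \<in> Vs A \<and> tgt e \<in> Vs A \<and> col e \<in> C"
  by (auto simp: is_arena_def src_def tgt_def col_def)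

lemma ipath_fpath:
  assumes "is_arena C A" "ipath A u p"
  shows "fpath A u (map p [0..<i])"
  using ipath_prefix[OF assms(2)] arena_edge[OF assms(1), of "p 0"] assms(2)
  by (auto simp: fpath_def ipath_def)

lemma chain_from_nth:
  "chain_from v es \<Longrightarrow> Suc i < length es \<Longrightarrow> tgt (es ! i) = src (es ! Suc i)"
  by (induction es arbitrary: v i) (auto simp: nth_Cons neq_Nil_conv split: nat.splits)

lemma chain_from_hd:
  "chain_from v es \<Longrightarrow> es \<noteq> [] \<Longrightarrow> src (es ! 0) = v"
  by (cases es) auto

lemma fpath_last_Vs:
  "is_arena C A \<Longrightarrow> fpath A v es \<Longrightarrow> last_node v es \<in> Vs A"
  by (cases es rule: rev_cases) (auto simp: fpath_def dest: arena_edge)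


locale ar =
  fixes A :: "(omega \<Rightarrow> omega) arena"
  assumes arena: "is_arena monoM A"
begin

definition safe :: "nat \<Rightarrow> (nat \<times> omega) set \<Rightarrow> bool" where
  "safe B Z \<longleftrightarrow> (\<forall>v x. (v,x) \<in> Z \<longrightarrow> v \<in> Vs A \<and> fst x \<le> B \<and>
     (v \<in> VP A \<longrightarrow> (\<exists>e\<in>Ed A. src e = v \<and> (tgt e, col e x) \<in> Z)) \<and>
     (v \<in> VA A \<longrightarrow> (\<forall>e\<in>Ed A. src e = v \<longrightarrow> (tgt e, col e x) \<in> Z)))"

definition SB :: "nat \<Rightarrow> (nat \<times> omega) set" where
  "SB B = \<Union>{Z. safe B Z}"

definition DD :: "(nat \<times> omega) set" where
  "DD = (\<Union>B. SB B)"

lemma safe_sub: "safe B Z \<Longrightarrow> Z \<subseteq> SB B"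
  by (auto simp: SB_def)

lemma safe_SB: "safe B (SB B)"
  unfolding safe_def
proof (intro allI impI)
  fix v x assume "(v,x) \<in> SB B"
  then obtain Z where Z: "safe B Z" "(v,x) \<in> Z" by (auto simp: SB_def)
  have sub: "Z \<subseteq> SB B" using Z(1) by (rule safe_sub)
  from Z show "v \<in> Vs A \<and> fst x \<le> B \<and>
     (v \<in> VP A \<longrightarrow> (\<exists>e\<in>Ed A. src e = v \<and> (tgt e, col e x) \<in> SB B)) \<and>
     (v \<in> VA A \<longrightarrow> (\<forall>e\<in>Ed A. src e = v \<longrightarrow> (tgt e, col e x) \<in> SB B))"
    unfolding safe_def using sub by blast
qed

lemma safe_mono: "safe B Z \<Longrightarrow> B \<le> B' \<Longrightarrow> safe B' Z"
  unfolding safe_def by fastforce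

lemma SB_mono: "B \<le> B' \<Longrightarrow> SB B \<subseteq> SB B'"
  using safe_SB safe_mono safe_sub by blast

lemma SB_bound: "(v,x) \<in> SB B \<Longrightarrow> fst x \<le> B \<and> v \<in> Vs A"
  using safe_SB[of B] unfolding safe_def by blast

lemma finite_DD_bound: "finite F \<Longrightarrow> F \<subseteq> DD \<Longrightarrow> \<exists>B1. F \<subseteq> SB B1"
proof (induction F rule: finite_induct)
  case empty then show ?case by auto
next
  case (insert q F)
  then obtain B1 where B1: "F \<subseteq> SB B1" by auto
  from insert obtain Bq where Bq: "q \<in> SB Bq" by (auto simp: DD_def)
  have "F \<subseteq> SB (max B1 Bq)" using B1 SB_mono[of B1 "max B1 Bq"] by auto
  moreover have "q \<in> SB (max B1 Bq)" using Bq SB_mono[of Bq "max B1 Bq"] by auto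
  ultimately show ?case by blast
qed

inductive_set Attr :: "nat \<Rightarrow> (nat \<times> omega) set" for B where
  base: "v \<in> Vs A \<Longrightarrow> (v,x) \<notin> DD \<Longrightarrow> B < fst x \<Longrightarrow> (v,x) \<in> Attr B"
| ant: "v \<in> VA A \<Longrightarrow> e \<in> Ed A \<Longrightarrow> src e = v \<Longrightarrow> (tgt e, col e x) \<in> Attr B \<Longrightarrow> (v,x) \<in> Attr B"
| pro: "v \<in> VP A \<Longrightarrow> \<forall>e\<in>Ed A. src e = v \<longrightarrow> (tgt e, col e x) \<in> Attr B \<Longrightarrow> (v,x) \<in> Attr B"

lemma edge: "e \<in> Ed A \<Longrightarrow> src e \<in> Vs A \<and> tgt e \<in> Vs A \<and> col e \<in> monoM"
  using arena_edge[OF arena] .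

lemma claim1:
  assumes v: "v \<in> Vs A" and nD: "(v,x) \<notin> DD"
  shows "(v,x) \<in> Attr B"
proof (rule ccontr)
  assume nA: "(v,x) \<notin> Attr B"
  define F where "F = (\<lambda>(e,y). (tgt e, col e y)) ` (Ed A \<times> ({..B} \<times> (UNIV::bool set)))"
  have finE: "finite (Ed A)" using arena by (simp add: is_arena_def)
  have "finite F" unfolding F_def using finE by auto
  then have "finite (F \<inter> DD)" by auto
  then obtain B1 where B1: "F \<inter> DD \<subseteq> SB B1" using finite_DD_bound by blast
  define B2 where "B2 = max B B1"
  define Z where "Z = {(w,y). w \<in> Vs A \<and> (w,y) \<notin> Attr B \<and> fst y \<le> B} \<union> SB B2"
  have key: "(tgt e, col e y) \<in> Z"
    if "fst y \<le> B" "e \<in> Ed A" "(tgt e, col e y) \<notin> Attr B" for y e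
  proof (cases "fst (col e y) \<le> B")
    case True
    then show ?thesis using that edge[of e] by (auto simp: Z_def)
  next
    case False
    then have "(tgt e, col e y) \<in> DD" using that edge[of e] Attr.base[where v="tgt e" and x="col e y" and B=B] by auto
    moreover have "(tgt e, col e y) \<in> F"
    proof -
      have "(e, y) \<in> Ed A \<times> ({..B} \<times> (UNIV::bool set))"
        using that by (cases y) auto
      then show ?thesis unfolding F_def by force
    qed
    ultimately have "(tgt e, col e y) \<in> SB B1" using B1 by auto
    then show ?thesis using SB_mono[of B1 B2] by (auto simp: Z_def B2_def)
  qed
  have "safe B2 Z"
    unfolding safe_def
  proof (intro allI impI)
    fix w y assume wy: "(w,y) \<in> Z"
    show "w \<in> Vs A \<and> fst y \<le> B2 \<and>
     (w \<in> VP A \<longrightarrow> (\<exists>e\<in>Ed A. src e = w \<and> (tgt e, col e y) \<in> Z)) \<and>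
     (w \<in> VA A \<longrightarrow> (\<forall>e\<in>Ed A. src e = w \<longrightarrow> (tgt e, col e y) \<in> Z))"
    proof (cases "(w,y) \<in> SB B2")
      case True
      then show ?thesis using safe_SB[of B2] unfolding safe_def Z_def by blast
    next
      case False
      with wy have w: "w \<in> Vs A" "(w,y) \<notin> Attr B" "fst y \<le> B" by (auto simp: Z_def)
      have "w \<in> VP A \<longrightarrow> (\<exists>e\<in>Ed A. src e = w \<and> (tgt e, col e y) \<in> Z)"
      proof
        assume "w \<in> VP A"
        then obtain e where "e \<in> Ed A" "src e = w" "(tgt e, col e y) \<notin> Attr B"
          using w(2) Attr.pro[where v=w and x=y and B=B] by blast
        then show "\<exists>e\<in>Ed A. src e = w \<and> (tgt e, col e y) \<in> Z" using key w(3) by blast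
      qed
      moreover have "w \<in> VA A \<longrightarrow> (\<forall>e\<in>Ed A. src e = w \<longrightarrow> (tgt e, col e y) \<in> Z)"
        using w key Attr.ant[where v=w and x=y and B=B] by blast
      ultimately show ?thesis using w B2_def by auto
    qed
  qed
  moreover have "(v,x) \<in> Z"
  proof -
    have "fst x \<le> B" using Attr.base[OF v nD] nA by (meson not_le)
    then show ?thesis using v nA by (auto simp: Z_def)
  qed
  ultimately have "(v,x) \<in> DD" using safe_sub unfolding DD_def by blast
  with nD show False by simp
qed

definition hist :: "(omega \<Rightarrow> omega) strategy \<Rightarrow> nat \<Rightarrow> (omega \<Rightarrow> omega) edge list \<Rightarrow> bool" where
  "hist S u es \<longleftrightarrow> fpath A u es \<and> (\<forall>i<length es. src (es!i) \<in> VP A \<longrightarrow> es!i = S u (take i es))"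

definition orb :: "(omega \<Rightarrow> omega) edge list \<Rightarrow> omega" where
  "orb es = foldl (\<lambda>x e. col e x) (0,False) es"

lemma orb_snoc[simp]: "orb (es @ [e]) = col e (orb es)"
  by (simp add: orb_def)

lemma hist_snoc:
  assumes "hist S u es" "e \<in> Ed A" "src e = last_node u es" "src e \<in> VP A \<longrightarrow> e = S u es"
  shows "hist S u (es @ [e])"
  using assms unfolding hist_def fpath_def by (auto simp: nth_append)

lemma disj: "VP A \<inter> VA A = {}"
  using arena by (simp add: is_arena_def)

lemma extend:
  assumes strat: "is_strategy A S"
  shows "(v,x) \<in> Attr B \<Longrightarrow> hist S u es \<Longrightarrow> last_node u es = v \<Longrightarrow> orb es = x \<Longrightarrow>
    \<exists>t. hist S u (es @ t) \<and> last_node u (es @ t) \<in> Vs A \<and>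
        (last_node u (es @ t), orb (es @ t)) \<notin> DD \<and> B < fst (orb (es @ t))"
proof (induction arbitrary: es rule: Attr.induct)
  case (base v x)
  then show ?case by (intro exI[of _ "[]"]) auto
next
  case (ant v e x)
  have "hist S u (es @ [e])"
    using ant disj by (intro hist_snoc) auto
  from ant.IH[OF this] obtain t where "hist S u ((es @ [e]) @ t) \<and> last_node u ((es @ [e]) @ t) \<in> Vs A \<and>
        (last_node u ((es @ [e]) @ t), orb ((es @ [e]) @ t)) \<notin> DD \<and> B < fst (orb ((es @ [e]) @ t))"
    using ant by auto
  then show ?case by (intro exI[of _ "e # t"]) simp
next
  case (pro v x)
  define e where "e = S u es"
  have "fpath A u es" using pro.prems by (simp add: hist_def)
  then have e: "e \<in> Ed A" "src e = v" using strat pro unfolding is_strategy_def e_def by auto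
  have "hist S u (es @ [e])"
    using pro e by (intro hist_snoc) (auto simp: e_def)
  from pro.IH[rule_format, OF e] this obtain t where "hist S u ((es @ [e]) @ t) \<and> last_node u ((es @ [e]) @ t) \<in> Vs A \<and>
        (last_node u ((es @ [e]) @ t), orb ((es @ [e]) @ t)) \<notin> DD \<and> B < fst (orb ((es @ [e]) @ t))"
    using pro by auto
  then show ?case by (intro exI[of _ "e # t"]) simp
qed

end


context ar
begin

lemma lemmaU:
  assumes strat: "is_strategy A S" and win: "winning_from A RL S u" and u: "u \<in> Vs A"
  shows "(u,(0,False)) \<in> DD"
proof (rule ccontr)
  assume nD: "(u,(0,False)) \<notin> DD"
  define P where "P es \<longleftrightarrow> hist S u es \<and> (last_node u es, orb es) \<notin> DD" for es
  define Q where "Q k h h' \<longleftrightarrow> P h' \<and> (\<exists>t. h' = h @ t) \<and> length h < length h' \<and> k < fst (orb h')"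
    for k h h'
  have step: "\<exists>h'. Q k h h'" if "P h" for h k
  proof -
    have hs: "hist S u h" and nd: "(last_node u h, orb h) \<notin> DD" using that by (auto simp: P_def)
    have "last_node u h \<in> Vs A" using hs fpath_last_Vs[OF arena] by (auto simp: hist_def)
    then have "(last_node u h, orb h) \<in> Attr (max k (fst (orb h)))" using claim1 nd by blast
    from extend[OF strat this hs] obtain t where t:
      "hist S u (h @ t)" "(last_node u (h @ t), orb (h @ t)) \<notin> DD" "max k (fst (orb h)) < fst (orb (h @ t))"
      by blast
    have "t \<noteq> []" using t(3) by auto
    then show ?thesis using t unfolding Q_def P_def by (intro exI[of _ "h @ t"]) auto
  qed
  define H where "H = rec_nat [] (\<lambda>k h. SOME h'. Q k h h')"
  have H0: "H 0 = []" by (simp add: H_def)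
  have HS: "H (Suc k) = (SOME h'. Q k (H k) h')" for k by (simp add: H_def)
  have PH: "P (H k) \<and> Q k (H k) (H (Suc k))" for k
  proof (induction k)
    case 0
    have "P []" using nD u by (auto simp: P_def hist_def fpath_def orb_def)
    then show ?case using step[of "[]" 0] someI_ex[of "Q 0 []"] by (auto simp: H0 HS)
  next
    case (Suc k)
    then have "P (H (Suc k))" by (simp add: Q_def)
    then show ?case using step[of "H (Suc k)" "Suc k"] someI_ex[of "Q (Suc k) (H (Suc k))"]
      by (simp add: HS[of "Suc k"])
  qed
  have prefix: "\<exists>t. H (k + j) = H k @ t" for k j
  proof (induction j)
    case 0 then show ?case by simp
  next
    case (Suc j)
    then obtain t where t: "H (k + j) = H k @ t" by blast
    from PH[of "k + j"] obtain t' where "H (Suc (k + j)) = H (k + j) @ t'" by (auto simp: Q_def)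
    then show ?case using t by auto
  qed
  have len: "k \<le> length (H k)" for k
  proof (induction k)
    case 0 then show ?case by simp
  next
    case (Suc k) then show ?case using PH[of k] by (auto simp: Q_def)
  qed
  have hist: "hist S u (H k)" for k using PH[of k] by (simp add: P_def)
  define p where "p i = H (Suc i) ! i" for i
  have pH: "H k ! i = p i" if "i < length (H k)" for i k
  proof (cases "Suc i \<le> k")
    case True
    then obtain t where "H k = H (Suc i) @ t" using prefix[of "Suc i" "k - Suc i"] by auto
    then show ?thesis using len[of "Suc i"] by (simp add: p_def nth_append)
  next
    case False
    then obtain t where "H (Suc i) = H k @ t" using prefix[of k "Suc i - k"] by auto
    then show ?thesis using that by (simp add: p_def nth_append)
  qed
  have mapH: "map p [0..<length (H k)] = H k" for k
    by (rule nth_equalityI) (auto simp: pH)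
  have takeH: "take i (H k) = map p [0..<i]" if "i \<le> length (H k)" for i k
  proof -
    have "take i (H k) = take i (map p [0..<length (H k)])" by (simp add: mapH)
    also have "\<dots> = map p [0..<i]" using that by (simp add: take_map)
    finally show ?thesis .
  qed
  have lenS: "i < length (H (Suc i))" for i using len[of "Suc i"] by simp
  have ip: "ipath A u p"
    unfolding ipath_def
  proof (intro conjI allI)
    fix i
    have "set (H (Suc i)) \<subseteq> Ed A" using hist[of "Suc i"] by (simp add: hist_def fpath_def)
    then show "p i \<in> Ed A" using lenS[of i] by (auto simp: p_def)
  next
    have "chain_from u (H 1)" using hist[of 1] by (simp add: hist_def fpath_def)
    moreover have "H 1 \<noteq> []" using lenS[of 0] by auto
    ultimately show "src (p 0) = u" using chain_from_hd by (simp add: p_def)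
  next
    fix i
    have "chain_from u (H (Suc (Suc i)))" using hist by (simp add: hist_def fpath_def)
    moreover have "Suc i < length (H (Suc (Suc i)))" using lenS[of "Suc i"] by simp
    ultimately have "tgt (H (Suc (Suc i)) ! i) = src (H (Suc (Suc i)) ! Suc i)" by (rule chain_from_nth)
    then show "tgt (p i) = src (p (Suc i))" using pH lenS[of "Suc i"]
      by (metis Suc_lessD)
  qed
  have cons: "consistent A S u p"
    unfolding consistent_def
  proof (intro allI impI)
    fix i assume "src (p i) \<in> VP A"
    then have "H (Suc i) ! i = S u (take i (H (Suc i)))"
      using hist[of "Suc i"] lenS[of i] by (auto simp: hist_def p_def)
    then show "p i = S u (map p [0..<i])"
      using takeH[of i "Suc i"] lenS[of i] by (simp add: p_def)
  qed
  have "(\<lambda>i. col (p i)) \<in> RL" using win ip cons by (simp add: winning_from_def)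
  then obtain N b where Nb: "\<forall>n\<ge>1. omega_le (comp_pref (\<lambda>i. col (p i)) n (0, False)) (N, b)"
    by (auto simp: RL_def)
  define n where "n = length (H (Suc N))"
  have "n \<ge> 1" using len[of "Suc N"] by (simp add: n_def)
  then have le: "omega_le (comp_pref (\<lambda>i. col (p i)) n (0, False)) (N, b)" using Nb by blast
  have "comp_pref (\<lambda>i. col (p i)) n (0, False) = orb (H (Suc N))"
    by (simp add: comp_pref_foldl orb_def n_def mapH)
  moreover have "N < fst (orb (H (Suc N)))" using PH[of N] by (simp add: Q_def)
  ultimately show False using le by (auto simp: omega_le_def)
qed

end


context ar
begin

lemma uniform_bound:
  "\<exists>Bm. \<forall>u\<in>Vs A. (\<exists>S'. is_strategy A S' \<and> winning_from A RL S' u) \<longrightarrow> (u,(0,False)) \<in> SB Bm"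
proof -
  define W where "W = {u \<in> Vs A. \<exists>S'. is_strategy A S' \<and> winning_from A RL S' u}"
  have "finite (Vs A)" using arena by (simp add: is_arena_def Vs_def)
  then have "finite ((\<lambda>u. (u,(0::nat,False))) ` W)" by (auto simp: W_def)
  moreover have "(\<lambda>u. (u,(0::nat,False))) ` W \<subseteq> DD" using lemmaU by (auto simp: W_def)
  ultimately obtain Bm where "(\<lambda>u. (u,(0::nat,False))) ` W \<subseteq> SB Bm" using finite_DD_bound by blast
  then show ?thesis by (auto simp: W_def)
qed

end

locale ar2 = ar +
  fixes Bm :: nat
begin

definition Z where "Z = SB Bm"
definition NN where "NN v b = Max {n. (v,(n,b)) \<in> Z}"
definition aa :: "nat \<Rightarrow> nat \<Rightarrow> omega" where "aa v c = (NN v (c \<noteq> 0), c \<noteq> 0)"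
definition dl :: "nat \<Rightarrow> (omega \<Rightarrow> omega) edge \<Rightarrow> nat" where
  "dl c e = (if snd (col e (aa (src e) c)) then 1 else 0)"
definition good where "good w c e \<longleftrightarrow> e \<in> Ed A \<and> src e = w \<and> (tgt e, col e (aa w c)) \<in> Z"
definition ch :: "nat \<Rightarrow> nat \<Rightarrow> (omega \<Rightarrow> omega) edge" where
  "ch w c = (if \<exists>e. good w c e then SOME e. good w c e else SOME e. e \<in> Ed A \<and> src e = w)"
definition Sg :: "(omega \<Rightarrow> omega) strategy" where
  "Sg v es = ch (last_node v es) (foldl dl 0 es)"

lemma safeZ: "safe Bm Z" by (simp add: Z_def safe_SB)

lemma aa_prop:
  assumes "(v,(n,b)) \<in> Z"
  shows "(v, aa v (if b then 1 else 0)) \<in> Z \<and> omega_le (n,b) (aa v (if b then 1 else 0))"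
proof -
  have fin: "finite {n. (v,(n,b)) \<in> Z}"
    by (rule finite_subset[of _ "{..Bm}"]) (auto simp: Z_def dest: SB_bound)
  have ne: "n \<in> {n. (v,(n,b)) \<in> Z}" using assms by simp
  have "NN v b \<in> {n. (v,(n,b)) \<in> Z}" unfolding NN_def using fin ne by (intro Max_in) auto
  moreover have "n \<le> NN v b" unfolding NN_def using fin ne by (intro Max_ge) auto
  moreover have "aa v (if b then 1 else 0) = (NN v b, b)" by (simp add: aa_def)
  ultimately show ?thesis by (auto simp: omega_le_def)
qed

lemma ch_edge: "w \<in> Vs A \<Longrightarrow> ch w c \<in> Ed A \<and> src (ch w c) = w"
proof -
  assume w: "w \<in> Vs A"
  have "\<exists>e. e \<in> Ed A \<and> src e = w" using w arena unfolding is_arena_def by blast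
  then show ?thesis unfolding ch_def good_def
    by (auto intro: someI2_ex)
qed

lemma ch_good: "\<exists>e. good w c e \<Longrightarrow> good w c (ch w c)"
  unfolding ch_def by (auto intro: someI_ex)

lemma Sg_strategy: "is_strategy A Sg"
  unfolding is_strategy_def Sg_def using ch_edge by (auto simp: Vs_def)

lemma Sg_built: "built_on A 0 dl Sg"
  unfolding built_on_def Sg_def by auto

lemma Sg_mem: "memory_structure A 2 0 dl"
  unfolding memory_structure_def dl_def by auto

lemma Sg_wins:
  assumes u: "(u,(0,False)) \<in> Z" and ip: "ipath A u p" and cons: "consistent A Sg u p"
  shows "(\<lambda>i. col (p i)) \<in> RL"
proof -
  define m where "m i = foldl dl 0 (map p [0..<i])" for i
  define x where "x i = foldl (\<lambda>x e. col e x) (0,False) (map p [0..<i])" for i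
  have inv: "(src (p i), aa (src (p i)) (m i)) \<in> Z \<and> omega_le (x i) (aa (src (p i)) (m i))" for i
  proof (induction i)
    case 0
    have "src (p 0) = u" using ip by (simp add: ipath_def)
    then show ?case using aa_prop[OF u] by (simp add: m_def x_def)
  next
    case (Suc i)
    define v where "v = src (p i)"
    define e where "e = p i"
    have e: "e \<in> Ed A" "src e = v" using ip by (auto simp: ipath_def e_def v_def)
    have vV: "v \<in> Vs A" using edge[OF e(1)] e(2) by simp
    define y where "y = col e (aa v (m i))"
    have IH: "(v, aa v (m i)) \<in> Z" "omega_le (x i) (aa v (m i))" using Suc by (auto simp: v_def)
    have yZ: "(tgt e, y) \<in> Z"
    proof (cases "v \<in> VP A")
      case True
      have "p i = Sg u (map p [0..<i])" using cons True by (simp add: consistent_def v_def)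
      also have "\<dots> = ch v (m i)" using ipath_prefix[OF ip, of i] by (simp add: Sg_def m_def v_def)
      finally have pe: "e = ch v (m i)" by (simp add: e_def)
      have "\<exists>e. good v (m i) e" using safeZ IH(1) True unfolding safe_def good_def by blast
      then have "good v (m i) e" using ch_good pe by simp
      then show ?thesis by (simp add: good_def y_def)
    next
      case False
      then have "v \<in> VA A" using vV by (simp add: Vs_def)
      then show ?thesis using safeZ IH(1) e unfolding safe_def y_def by blast
    qed
    have nxt: "src (p (Suc i)) = tgt e" using ip by (simp add: ipath_def e_def)
    have mS: "m (Suc i) = (if snd y then 1 else 0)"
      by (simp add: m_def dl_def y_def e_def v_def)
    have xS: "x (Suc i) = col e (x i)" by (simp add: x_def e_def)
    have A1: "(tgt e, aa (tgt e) (m (Suc i))) \<in> Z \<and> omega_le y (aa (tgt e) (m (Suc i)))"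
      using aa_prop[of "tgt e" "fst y" "snd y"] yZ mS by simp
    have "omega_le (x (Suc i)) y" unfolding xS y_def using monoM_D edge[OF e(1)] IH(2) by blast
    then show ?case using A1 nxt omega_le_trans by metis
  qed
  have bnd: "omega_le (x i) (Suc Bm, False)" for i
  proof -
    have "fst (aa (src (p i)) (m i)) \<le> Bm"
      using inv[of i] SB_bound unfolding Z_def by (metis prod.collapse)
    then have "fst (x i) \<le> Bm" using inv[of i] by (auto simp: omega_le_def)
    then show ?thesis by (auto simp: omega_le_def)
  qed
  have "\<forall>i. col (p i) \<in> monoM" using ip edge by (auto simp: ipath_def)
  moreover have "\<forall>n\<ge>1. omega_le (comp_pref (\<lambda>i. col (p i)) n (0, False)) (Suc Bm, False)"
    using bnd by (simp add: comp_pref_foldl x_def)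
  ultimately show ?thesis unfolding RL_def by blast
qed

end

lemma upper: "has_mem_optimal monoM RL 2"
  unfolding has_mem_optimal_def
proof (intro allI impI)
  fix A :: "(omega \<Rightarrow> omega) arena"
  assume arA: "is_arena monoM A"
  interpret ar A using arA by (unfold_locales)
  obtain Bm where Bm: "\<forall>u\<in>Vs A. (\<exists>S'. is_strategy A S' \<and> winning_from A RL S' u) \<longrightarrow> (u,(0,False)) \<in> SB Bm"
    using uniform_bound by blast
  interpret ar2 A Bm by unfold_locales
  have "optimal A RL Sg"
    unfolding optimal_def
  proof (intro notI, elim bexE conjE)
    fix u assume u: "u \<in> Vs A" "\<exists>S'. is_strategy A S' \<and> winning_from A RL S' u"
      "\<not> winning_from A RL Sg u"
    then have "(u,(0,False)) \<in> Z" using Bm by (simp add: Z_def)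
    then have "winning_from A RL Sg u" using Sg_wins by (simp add: winning_from_def)
    with u show False by simp
  qed
  then show "\<exists>m0 \<delta> S. memory_structure A 2 m0 \<delta> \<and> is_strategy A S \<and> built_on A m0 \<delta> S \<and> optimal A RL S"
    using Sg_mem Sg_strategy Sg_built by blast
qed


definition f0 :: "omega \<Rightarrow> omega" where "f0 x = (fst x, False)"
definition f1 :: "omega \<Rightarrow> omega" where "f1 x = (fst x, True)"
definition h0 :: "omega \<Rightarrow> omega" where
  "h0 x = (if snd x then (Suc (fst x), False) else (fst x, False))"
definition h1 :: "omega \<Rightarrow> omega" where
  "h1 x = (if snd x then (fst x, True) else (Suc (fst x), True))"

definition E0 :: "(omega \<Rightarrow> omega) edge" where "E0 = (0, f0, 1)"
definition E1 :: "(omega \<Rightarrow> omega) edge" where "E1 = (0, f1, 1)"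
definition H0 :: "(omega \<Rightarrow> omega) edge" where "H0 = (1, h0, 0)"
definition H1 :: "(omega \<Rightarrow> omega) edge" where "H1 = (1, h1, 0)"

definition A0 :: "(omega \<Rightarrow> omega) arena" where
  "A0 = ({1}, {0}, {E0, E1, H0, H1})"

lemma f0_mono: "f0 \<in> monoM" by (auto simp: monoM_def omega_le_def f0_def)
lemma f1_mono: "f1 \<in> monoM" by (auto simp: monoM_def omega_le_def f1_def)
lemma h0_mono: "h0 \<in> monoM" by (auto simp: monoM_def omega_le_def h0_def)
lemma h1_mono: "h1 \<in> monoM" by (auto simp: monoM_def omega_le_def h1_def)

lemma f01: "f0 \<noteq> f1" by (auto simp: fun_eq_iff f0_def f1_def)
lemma h01: "h0 \<noteq> h1"
proof
  assume "h0 = h1" then have "h0 (0,False) = h1 (0,False)" by simp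
  then show False by (simp add: h0_def h1_def)
qed

lemma edges_simps[simp]:
  "src E0 = 0" "src E1 = 0" "src H0 = 1" "src H1 = 1"
  "tgt E0 = 1" "tgt E1 = 1" "tgt H0 = 0" "tgt H1 = 0"
  "col E0 = f0" "col E1 = f1" "col H0 = h0" "col H1 = h1"
  "E0 \<noteq> E1" "H0 \<noteq> H1" "E1 \<noteq> E0" "H1 \<noteq> H0"
  "E0 \<noteq> H0" "E0 \<noteq> H1" "E1 \<noteq> H0" "E1 \<noteq> H1"
  "H0 \<noteq> E0" "H1 \<noteq> E0" "H0 \<noteq> E1" "H1 \<noteq> E1"
  using f01 h01
  by (auto simp: E0_def E1_def H0_def H1_def src_def tgt_def col_def)

lemma A0_simps[simp]: "VP A0 = {1}" "VA A0 = {0}" "Ed A0 = {E0, E1, H0, H1}" "Vs A0 = {0,1}"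
  by (auto simp: A0_def VP_def VA_def Ed_def Vs_def)

lemma A0_arena: "is_arena monoM A0"
  unfolding is_arena_def
  using f0_mono f1_mono h0_mono h1_mono
  by (auto simp: E0_def E1_def H0_def H1_def src_def)

definition Sw :: "(omega \<Rightarrow> omega) strategy" where
  "Sw v es = (if es \<noteq> [] \<and> last es = E1 then H1 else H0)"

lemma Sw_strategy: "is_strategy A0 Sw"
  by (auto simp: is_strategy_def Sw_def)

lemma Sw_wins: "winning_from A0 RL Sw 0"
  unfolding winning_from_def
proof (intro allI impI, elim conjE)
  fix p assume ip: "ipath A0 0 p" and cons: "consistent A0 Sw 0 p"
  define x where "x i = foldl (\<lambda>x e. col e x) (0,False) (map p [0..<i])" for i
  have pE: "p i \<in> {E0, E1, H0, H1}" for i using ip by (auto simp: ipath_def)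
  have inv: "fst (x i) = 0 \<and> (0 < i \<longrightarrow> src (p i) = 1 \<longrightarrow> snd (x i) = (p (i - 1) = E1))" for i
  proof (induction i)
    case 0 then show ?case by (simp add: x_def)
  next
    case (Suc i)
    have xS: "x (Suc i) = col (p i) (x i)" by (simp add: x_def)
    have nxt: "src (p (Suc i)) = tgt (p i)" using ip by (simp add: ipath_def)
    have i0: "src (p i) = 1 \<Longrightarrow> 0 < i" using ip by (cases i) (auto simp: ipath_def)
    have cH: "src (p i) = 1 \<Longrightarrow> p i = Sw 0 (map p [0..<i])"
      using cons by (simp add: consistent_def)
    have lastp: "0 < i \<Longrightarrow> map p [0..<i] \<noteq> [] \<and> last (map p [0..<i]) = p (i - 1)"
      by (cases i) auto
    from pE[of i] show ?case
    proof (elim insertE emptyE)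
      assume "p i = E0" then show ?thesis using Suc xS nxt by (simp add: f0_def)
    next
      assume "p i = E1" then show ?thesis using Suc xS nxt by (simp add: f1_def)
    next
      assume a: "p i = H0"
      then have "0 < i" using i0 by simp
      then have "p (i - 1) \<noteq> E1" using cH a lastp by (auto simp: Sw_def split: if_splits)
      then have "x i = (0, False)" using Suc \<open>0 < i\<close> a by (metis prod.collapse edges_simps(3))
      then show ?thesis using xS nxt a by (simp add: h0_def)
    next
      assume a: "p i = H1"
      then have "0 < i" using i0 by simp
      then have "p (i - 1) = E1" using cH a lastp by (auto simp: Sw_def split: if_splits)
      then have "x i = (0, True)" using Suc \<open>0 < i\<close> a by (metis prod.collapse edges_simps(4))
      then show ?thesis using xS nxt a by (simp add: h1_def)
    qed
  qed
  have "\<forall>i. col (p i) \<in> monoM" using pE f0_mono f1_mono h0_mono h1_mono by (metis edges_simps insertE empty_iff)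
  moreover have "\<forall>n\<ge>1. omega_le (comp_pref (\<lambda>i. col (p i)) n (0, False)) (1, False)"
    using inv by (auto simp: comp_pref_foldl x_def[symmetric] omega_le_def)
  ultimately show "(\<lambda>i. col (p i)) \<in> RL" unfolding RL_def by blast
qed

lemma lower: "\<not> has_mem_optimal monoM RL 1"
proof
  assume "has_mem_optimal monoM RL 1"
  then obtain m0 \<delta> S where ms: "memory_structure A0 1 m0 \<delta>" and st: "is_strategy A0 S"
    and bo: "built_on A0 m0 \<delta> S" and opt: "optimal A0 RL S"
    using A0_arena unfolding has_mem_optimal_def by blast
  have m0: "m0 = 0" and d0: "\<And>e. e \<in> Ed A0 \<Longrightarrow> \<delta> 0 e = 0"
    using ms by (auto simp: memory_structure_def)
  have fold0: "set es \<subseteq> Ed A0 \<Longrightarrow> foldl \<delta> 0 es = 0" for es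
    by (induction es rule: rev_induct) (auto simp: d0)
  have win: "winning_from A0 RL S 0"
    using opt Sw_strategy Sw_wins unfolding optimal_def by auto
  define es where "es = S 1 []"
  have "fpath A0 1 []" by (simp add: fpath_def)
  then have es: "es \<in> Ed A0" "src es = 1" using st unfolding is_strategy_def es_def by auto
  then have esH: "es = H0 \<or> es = H1" by auto
  define Ea where "Ea = (if es = H0 then E1 else E0)"
  define p where "p i = (if even (i::nat) then Ea else es)" for i
  have tes: "tgt es = 0" using esH by auto
  have ip: "ipath A0 0 p"
    unfolding ipath_def using es tes by (auto simp: p_def Ea_def)
  have cons: "consistent A0 S 0 p"
    unfolding consistent_def
  proof (intro allI impI)
    fix i assume "src (p i) \<in> VP A0"
    then have odd: "odd i" by (auto simp: p_def Ea_def split: if_splits)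
    have fp: "fpath A0 0 (map p [0..<i])" using ipath_fpath[OF A0_arena ip] .
    have ln: "last_node 0 (map p [0..<i]) = 1"
      using ipath_prefix[OF ip, of i] odd es by (simp add: p_def)
    have "foldl \<delta> m0 (map p [0..<i]) = foldl \<delta> m0 []"
      using fp fold0 m0 by (simp add: fpath_def)
    then have "S 0 (map p [0..<i]) = S 1 []"
      using bo fp ln \<open>fpath A0 1 []\<close> unfolding built_on_def by (metis A0_simps(1) insertI1 last_node_Nil)
    then show "p i = S 0 (map p [0..<i])" using odd by (simp add: p_def es_def)
  qed
  have "(\<lambda>i. col (p i)) \<in> RL" using win ip cons by (simp add: winning_from_def)
  then obtain N b where Nb: "\<forall>n\<ge>1. omega_le (comp_pref (\<lambda>i. col (p i)) n (0, False)) (N, b)"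
    by (auto simp: RL_def)
  define x where "x i = foldl (\<lambda>x e. col e x) (0,False) (map p [0..<i])" for i
  have xk: "fst (x (2 * k)) = k" for k
  proof (induction k)
    case 0 then show ?case by (simp add: x_def)
  next
    case (Suc k)
    have "x (2 * Suc k) = col (p (Suc (2 * k))) (col (p (2 * k)) (x (2 * k)))"
      by (simp add: x_def)
    also have "\<dots> = col es (col Ea (x (2 * k)))" by (simp add: p_def)
    finally show ?case
      using esH Suc by (auto simp: Ea_def f0_def f1_def h0_def h1_def)
  qed
  have "omega_le (comp_pref (\<lambda>i. col (p i)) (2 * Suc N) (0, False)) (N, b)" by (rule Nb[rule_format]) simp
  then have "omega_le (x (2 * Suc N)) (N, b)" by (simp add: comp_pref_foldl x_def)
  then show False using xk[of "Suc N"] by (simp add: omega_le_def)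
qed

theorem proposition1:
  shows "GenMem monoM RL = 2"
proof -
  have ex: "\<exists>k\<ge>1. has_mem_optimal monoM RL k" using upper by (intro exI[of _ 2]) simp
  have "(LEAST k. k \<ge> 1 \<and> has_mem_optimal monoM RL k) = 2"
  proof (rule Least_equality)
    show "2 \<ge> (1::nat) \<and> has_mem_optimal monoM RL 2" using upper by simp
  next
    fix y :: nat assume "1 \<le> y \<and> has_mem_optimal monoM RL y"
    then show "2 \<le> y" using lower by (cases "y = 1") auto
  qed
  then show ?thesis using ex by (simp add: GenMem_def numeral_eq_enat)
qed

end
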